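(* Let $A\in \mathbb{R}^{m\times n}$ and $b\in \mathbb{R}^m$ with $m<n$. Suppose that the linear system $Ax=b$ is consistent and has a solution $x_*$. Suppose there are index sets $\mathbb{I}_1\subseteq\{1,\dots,m\}$ and $\mathbb{I}_2\subseteq\{1,\dots,n\}$ with $\operatorname{card}(\mathbb{I}_1)=\operatorname{card}(\mathbb{I}_2)=\operatorname{rank}(A)$ such that the submatrix $A_{(\mathbb{I}_1,\mathbb{I}_2)}$ is nonsingular and the subvector $x_{*\mathbb{I}_2}$ has no zero entry. Let $\mathbb{I}_2^{c}=\{1,\dots,n\}\setminus\mathbb{I}_2$. (a) If not all entries of $x_{*\mathbb{I}_2^{c}}$ are $0$, then $Ax=b$ has infinitely many solutions with the same sign pattern as $x_*$. (b) $Ax=b$ has infinitely many solutions $x$ such that $x_{\mathbb{I}_2}$ has the same sign pattern as $x_{*\mathbb{I}_2}$. (c) If $x_{*\mathbb{I}_2^{c}}=0$, then $Ax=b$ has no solution other than $x_*$ with the same sign pattern as $x_*$.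
   Context: For a matrix $X$ and index sets $\mathbb{I}_1,\mathbb{I}_2$, $X_{(\mathbb{I}_1,\mathbb{I}_2)}$ is the submatrix consisting of the entries $X_{(i,j)}$ with $i\in\mathbb{I}_1$, $j\in\mathbb{I}_2$; for a vector $x$, $x_{\mathbb{I}}$ is the subvector of entries $x_{(i)}$, $i\in\mathbb{I}$. $\operatorname{card}$ denotes cardinality. The sign function is $\operatorname{sign}(r)=1,0,-1$ for $r>0$, $r=0$, $r<0$. A vector $x$ has the sign pattern $s\in\{-1,0,1\}^n$ if $\operatorname{sign}(x_{(i)})=s_{(i)}$ for all $i$; two vectors have the same sign pattern if their entrywise signs agree. *)

theory Defs
  imports "Jordan_Normal_Form.DL_Rank" "Jordan_Normal_Form.DL_Submatrix"
begin

definition same_sign_on :: "nat set \<Rightarrow> real vec \<Rightarrow> real vec \<Rightarrow> bool" where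
  "same_sign_on J x y \<longleftrightarrow> (\<forall>i\<in>J. sgn (x $ i) = sgn (y $ i))"

end

theory Submission
  imports Defs "Jordan_Normal_Form.DL_Rank_Submatrix"
begin

lemma pick_bij:
  assumes "finite I"
  shows "bij_betw (pick I) {..<card I} I"
proof -
  have inj: "inj_on (pick I) {..<card I}"
  proof (rule inj_onI)
    fix x y assume x: "x \<in> {..<card I}" and y: "y \<in> {..<card I}" and e: "pick I x = pick I y"
    show "x = y"
    proof (rule ccontr)
      assume "x \<noteq> y"
      hence "x < y \<or> y < x" by arith
      moreover have "x < y \<Longrightarrow> pick I x < pick I y" using y by (intro pick_mono) auto
      moreover have "y < x \<Longrightarrow> pick I y < pick I x" using x by (intro pick_mono) auto
      ultimately show False using e by auto
    qed
  qed
  have "pick I ` {..<card I} = I"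
  proof
    show "pick I ` {..<card I} \<subseteq> I"
    proof
      fix k assume "k \<in> pick I ` {..<card I}"
      then obtain l where "l < card I" "k = pick I l" by auto
      thus "k \<in> I" using pick_in_set[of l I] by simp
    qed
    show "I \<subseteq> pick I ` {..<card I}"
    proof
      fix k assume k: "k \<in> I"
      have "{a\<in>I. a < k} \<subset> I" using k by auto
      hence "card {a\<in>I. a < k} < card I" using assms by (simp add: psubset_card_mono)
      hence "card {a\<in>I. a < k} \<in> {..<card I}" by simp
      from rev_image_eqI[where f="pick I", OF this pick_card_in_set[OF k, symmetric]]
      show "k \<in> pick I ` {..<card I}" .
    qed
  qed
  thus ?thesis using inj bij_betw_def by blast
qed

lemma mult_support:
  fixes A :: "'a::comm_ring_1 mat"
  assumes A: "A \<in> carrier_mat m n" and I: "I \<subseteq> {0..<n}" and d: "d \<in> carrier_vec n"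
    and z: "\<forall>k<n. k \<notin> I \<longrightarrow> d $ k = 0"
  shows "A *\<^sub>v d = submatrix A UNIV I *\<^sub>v vec (card I) (\<lambda>l. d $ pick I l)"
proof -
  have fin: "finite I" using I finite_subset by blast
  have cI: "{j. j < n \<and> j \<in> I} = I" using I by auto
  have dimB: "dim_row (submatrix A UNIV I) = m" "dim_col (submatrix A UNIV I) = card I"
    using A cI by (auto simp: dim_submatrix)
  show ?thesis
  proof (rule eq_vecI)
    show "dim_vec (A *\<^sub>v d) = dim_vec (submatrix A UNIV I *\<^sub>v vec (card I) (\<lambda>l. d $ pick I l))"
      using A dimB by simp
    fix i assume "i < dim_vec (submatrix A UNIV I *\<^sub>v vec (card I) (\<lambda>l. d $ pick I l))"
    hence i: "i < m" using dimB by simp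
    have "(A *\<^sub>v d) $ i = (\<Sum>k\<in>{0..<n}. A $$ (i,k) * d $ k)"
      using A d i by (simp add: scalar_prod_def)
    also have "\<dots> = (\<Sum>k\<in>I. A $$ (i,k) * d $ k)"
      by (rule sum.mono_neutral_right) (use I z in auto)
    also have "\<dots> = (\<Sum>l\<in>{..<card I}. A $$ (i,pick I l) * d $ pick I l)"
      using sum.reindex_bij_betw[OF pick_bij[OF fin], of "\<lambda>k. A $$ (i,k) * d $ k"] by simp
    also have "\<dots> = (submatrix A UNIV I *\<^sub>v vec (card I) (\<lambda>l. d $ pick I l)) $ i"
    proof -
      have "\<And>l. l < card I \<Longrightarrow> submatrix A UNIV I $$ (i,l) = A $$ (i, pick I l)"
        using submatrix_index[of i A UNIV _ I] i A cI pick_UNIV by auto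
      thus ?thesis using i dimB by (auto simp: scalar_prod_def lessThan_atLeast0 intro!: sum.cong)
    qed
    finally show "(A *\<^sub>v d) $ i = (submatrix A UNIV I *\<^sub>v vec (card I) (\<lambda>l. d $ pick I l)) $ i" .
  qed
qed


lemma (in vec_space) minor_indep:
assumes "A \<in> carrier_mat n nc"
assumes "det (submatrix A I J) \<noteq> 0"
shows "distinct (cols (submatrix A UNIV J))" "lin_indpt (set (cols (submatrix A UNIV J)))"
proof -
  have square:"dim_row (submatrix A I J) = dim_col (submatrix A I J)"
   using det_def \<open>det (submatrix A I J) \<noteq> 0\<close> by metis
  then have full_rank:"vec_space.rank (dim_row (submatrix A I J)) (submatrix A I J) = dim_row (submatrix A I J)"
   using vec_space.low_rank_det_zero assms(2) carrier_matI by auto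
  then have distinct:"distinct (cols (submatrix A I J))" 
    using vec_space.non_distinct_low_rank square less_irrefl carrier_matI by metis
  then have indpt:"LinearCombinations.module.lin_indpt class_ring (module_vec TYPE('a) (dim_row (submatrix A I J))) (set (cols (submatrix A I J)))"
     using vec_space.full_rank_lin_indpt[OF _ full_rank distinct] square by fastforce
  have distinct2: "distinct (cols (submatrix (submatrix A UNIV J) I UNIV))" using submatrix_split distinct by metis
  have indpt2:"LinearCombinations.module.lin_indpt class_ring (module_vec TYPE('a) (card {i. i < n \<and> i \<in> I})) (set (cols (submatrix (submatrix A UNIV J) I UNIV)))"
    using submatrix_split dim_submatrix(1) indpt by (metis (full_types) assms(1) carrier_matD(1))
  have "submatrix A UNIV J \<in> carrier_mat n (dim_col (submatrix A UNIV J))"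
    apply (rule carrier_matI) unfolding dim_submatrix(1) using \<open>A \<in> carrier_mat n nc\<close> carrier_matD by simp_all
  show "lin_indpt (set (cols (submatrix A UNIV J)))"
    using indpt2 vec_space.lin_dep_submatrix_UNIV[OF \<open>submatrix A UNIV J \<in> carrier_mat n (dim_col (submatrix A UNIV J))\<close> _ distinct2] by blast
  show "distinct (cols (submatrix A UNIV J))" by (metis distinct distinct_cols_submatrix_UNIV submatrix_split)
qed

lemma (in vec_space) col_in_span:
  assumes A: "A \<in> carrier_mat n nc" and I: "I \<subseteq> {0..<nc}"
    and dist: "distinct (cols (submatrix A UNIV I))"
    and ind: "lin_indpt (set (cols (submatrix A UNIV I)))"
    and r: "card I = rank A" and j: "j < nc"
  shows "\<exists>w\<in>carrier_vec (card I). submatrix A UNIV I *\<^sub>v w = col A j"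
proof -
  define B where "B = submatrix A UNIV I"
  define T where "T = set (cols B)"
  have cI: "{j. j < nc \<and> j \<in> I} = I" using I by auto
  have Bc: "B \<in> carrier_mat n (card I)"
    using A cI unfolding B_def by (intro carrier_matI) (simp_all add: dim_submatrix)
  have TA: "T \<subseteq> set (cols A)" unfolding T_def B_def by (rule cols_submatrix_subset)
  have cardT: "card T = card I" unfolding T_def using distinct_card[OF dist[folded B_def]] Bc by simp
  have "dim_row B = n" using Bc by simp
  hence Tc: "T \<subseteq> carrier_vec n" unfolding T_def using cols_dim[of B] by simp
  have finT: "finite T" unfolding T_def by simp
  have indT: "lin_indpt T" using ind unfolding T_def B_def .
  define c where "c = col A j"
  have jl: "j < length (cols A)" using A j by simp
  have "cols A ! j = col A j" using A j by simp
  hence cA: "c \<in> set (cols A)" unfolding c_def using nth_mem[OF jl] by simp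
  have cc: "c \<in> carrier_vec n" unfolding c_def using A j by auto
  have "c \<in> span T"
  proof (cases "c \<in> T")
    case True show ?thesis using subsetD[OF in_own_span[OF Tc] True] .
  next
    case False
    show ?thesis
    proof (rule ccontr)
      assume "c \<notin> span T"
      hence li: "lin_indpt (T \<union> {c})" using lin_dep_iff_in_span[OF Tc indT cc False] by simp
      have su: "T \<union> {c} \<subseteq> set (cols A)" using TA cA by simp
      have "card (T \<union> {c}) \<le> rank A" using rank_ge_card_indpt[OF A su li] .
      moreover have "card (T \<union> {c}) = card I + 1" using False finT cardT by simp
      ultimately show False using r by simp
    qed
  qed
  then obtain a where a: "lincomb a T = c" using finite_in_span[OF finT Tc] by auto
  have "B *\<^sub>v vec (card I) (\<lambda>i. a (col B i)) = lincomb a (set (cols B))"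
    using mat_mult_eq_lincomb[OF Bc dist[folded B_def]] .
  hence "B *\<^sub>v vec (card I) (\<lambda>i. a (col B i)) = col A j" using a unfolding T_def c_def by simp
  moreover have "vec (card I) (\<lambda>i. a (col B i)) \<in> carrier_vec (card I)" by simp
  ultimately show ?thesis unfolding B_def by (rule rev_bexI[rotated])
qed

lemma sgn_pert:
  fixes a e :: real
  assumes "\<bar>e\<bar> < \<bar>a\<bar>"
  shows "sgn (a + e) = sgn a"
  using assms by (cases "a > 0") (auto simp: sgn_if)

lemma small_delta:
  fixes c v :: "nat \<Rightarrow> real"
  assumes "finite K" "\<forall>k\<in>K. c k > 0"
  shows "\<exists>\<delta>>0. \<forall>t. 0 < t \<and> t < \<delta> \<longrightarrow> (\<forall>k\<in>K. t * \<bar>v k\<bar> < c k)"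
proof -
  define \<delta> where "\<delta> = Min (insert 1 ((\<lambda>k. c k / (\<bar>v k\<bar> + 1)) ` K))"
  have fin: "finite (insert 1 ((\<lambda>k. c k / (\<bar>v k\<bar> + 1)) ` K))" using assms(1) by simp
  have pos: "\<delta> > 0" unfolding \<delta>_def using fin assms(2)
    by (subst Min_gr_iff) (auto intro!: divide_pos_pos)
  have "\<forall>t. 0 < t \<and> t < \<delta> \<longrightarrow> (\<forall>k\<in>K. t * \<bar>v k\<bar> < c k)"
  proof (intro allI impI ballI)
    fix t k assume t: "0 < t \<and> t < \<delta>" and k: "k \<in> K"
    have "\<delta> \<le> c k / (\<bar>v k\<bar> + 1)" unfolding \<delta>_def using fin k by (intro Min_le) auto
    hence "t < c k / (\<bar>v k\<bar> + 1)" using t by linarith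
    hence "t * (\<bar>v k\<bar> + 1) < c k" by (simp add: pos_less_divide_eq add_pos_nonneg)
    thus "t * \<bar>v k\<bar> < c k" using t by (smt (verit) mult_nonneg_nonneg abs_ge_zero distrib_left)
  qed
  thus ?thesis using pos by blast
qed

lemma inf_sol:
  fixes A :: "real mat"
  assumes A: "A \<in> carrier_mat m n" and xs: "xs \<in> carrier_vec n" and v: "v \<in> carrier_vec n"
    and Av: "A *\<^sub>v v = 0\<^sub>v m" and j: "j < n" "v $ j \<noteq> 0" and J: "J \<subseteq> {0..<n}"
    and ok: "\<forall>k\<in>J. xs $ k \<noteq> 0 \<or> v $ k = 0"
  shows "infinite {x \<in> carrier_vec n. A *\<^sub>v x = A *\<^sub>v xs \<and> same_sign_on J x xs}"
proof -
  define K where "K = {k\<in>J. xs $ k \<noteq> 0}"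
  have finK: "finite K" unfolding K_def using J finite_subset by (metis (no_types, lifting) finite_atLeastLessThan mem_Collect_eq subset_iff)
  obtain \<delta> where d: "\<delta> > 0" and dd: "\<forall>t. 0 < t \<and> t < \<delta> \<longrightarrow> (\<forall>k\<in>K. t * \<bar>v $ k\<bar> < \<bar>xs $ k\<bar>)"
    using small_delta[OF finK, of "\<lambda>k. \<bar>xs $ k\<bar>" "\<lambda>k. v $ k"] unfolding K_def by auto
  define f where "f t = xs + t \<cdot>\<^sub>v v" for t :: real
  have inj: "inj_on f {0<..<\<delta>}"
  proof (rule inj_onI)
    fix s t assume "f s = f t"
    hence "f s $ j = f t $ j" by simp
    hence "s * v $ j = t * v $ j" unfolding f_def using xs v j by simp
    thus "s = t" using j(2) by simp
  qed
  have sub: "f ` {0<..<\<delta>} \<subseteq> {x \<in> carrier_vec n. A *\<^sub>v x = A *\<^sub>v xs \<and> same_sign_on J x xs}"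
  proof
    fix x assume "x \<in> f ` {0<..<\<delta>}"
    then obtain t where t: "0 < t" "t < \<delta>" and x: "x = f t" by auto
    have xc: "x \<in> carrier_vec n" unfolding x f_def using xs v by simp
    have "A *\<^sub>v x = A *\<^sub>v xs + t \<cdot>\<^sub>v (A *\<^sub>v v)"
      unfolding x f_def using mult_add_distrib_mat_vec[OF A xs smult_carrier_vec[THEN iffD2, OF v]] mult_mat_vec[OF A v] by simp
    also have "\<dots> = A *\<^sub>v xs" unfolding Av using A xs by (intro eq_vecI) auto
    finally have eq: "A *\<^sub>v x = A *\<^sub>v xs" .
    have "same_sign_on J x xs" unfolding same_sign_on_def
    proof
      fix k assume k: "k \<in> J"
      hence kn: "k < n" using J by auto
      have xk: "x $ k = xs $ k + t * v $ k" unfolding x f_def using xs v kn by simp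
      show "sgn (x $ k) = sgn (xs $ k)"
      proof (cases "xs $ k = 0")
        case True thus ?thesis using ok k xk by auto
      next
        case False
        hence "k \<in> K" unfolding K_def using k by auto
        hence "t * \<bar>v $ k\<bar> < \<bar>xs $ k\<bar>" using dd t by auto
        hence "\<bar>t * v $ k\<bar> < \<bar>xs $ k\<bar>" using t by (simp add: abs_mult)
        thus ?thesis using xk sgn_pert by simp
      qed
    qed
    thus "x \<in> {x \<in> carrier_vec n. A *\<^sub>v x = A *\<^sub>v xs \<and> same_sign_on J x xs}" using xc eq by simp
  qed
  have "infinite (f ` {0<..<\<delta>})" using inj infinite_Ioo[OF d] finite_imageD by blast
  thus ?thesis using sub infinite_super by blast
qed

theorem lemma2p1:
  fixes A :: "real mat" and b xs :: "real vec" and m n :: nat and I1 I2 :: "nat set"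
  assumes A: "A \<in> carrier_mat m n" and b: "b \<in> carrier_vec m"
    and mn: "m < n"
    and xs: "xs \<in> carrier_vec n" "A *\<^sub>v xs = b"
    and I1: "I1 \<subseteq> {0..<m}" and I2: "I2 \<subseteq> {0..<n}"
    and cards: "card I1 = vec_space.rank m A" "card I2 = vec_space.rank m A"
    and nonsing: "det (submatrix A I1 I2) \<noteq> 0"
    and nz: "\<forall>i\<in>I2. xs $ i \<noteq> 0"
  shows
    "((\<exists>i\<in>{0..<n} - I2. xs $ i \<noteq> 0) \<longrightarrow>
        infinite {x \<in> carrier_vec n. A *\<^sub>v x = b \<and> same_sign_on {0..<n} x xs})
     \<and> infinite {x \<in> carrier_vec n. A *\<^sub>v x = b \<and> same_sign_on I2 x xs}
     \<and> ((\<forall>i\<in>{0..<n} - I2. xs $ i = 0) \<longrightarrow>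
        (\<forall>x \<in> carrier_vec n. A *\<^sub>v x = b \<and> same_sign_on {0..<n} x xs \<longrightarrow> x = xs))"
proof -
  interpret vs: vec_space "TYPE(real)" m .
  define B where "B = submatrix A UNIV I2"
  have fin2: "finite I2" using finite_subset[OF I2 finite_atLeastLessThan] .
  have cI2: "{j. j < n \<and> j \<in> I2} = I2" using I2 by auto
  have Bc: "B \<in> carrier_mat m (card I2)"
    using A cI2 unfolding B_def by (intro carrier_matI) (simp_all add: dim_submatrix)
  have dist: "distinct (cols B)" and ind: "vs.lin_indpt (set (cols B))"
    using vs.minor_indep[OF A nonsing] unfolding B_def by simp_all
  have span: "\<exists>w\<in>carrier_vec (card I2). B *\<^sub>v w = col A j" if "j < n" for j
    using vs.col_in_span[OF A I2 dist[unfolded B_def] ind[unfolded B_def] cards(2) that] unfolding B_def .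
  have picks: "pick I2 l \<in> I2" "card {a\<in>I2. a < pick I2 l} = l" if "l < card I2" for l
    using pick_in_set[of l I2] card_pick[of l I2] that by simp_all
  have ker: "\<exists>v\<in>carrier_vec n. A *\<^sub>v v = 0\<^sub>v m \<and> v $ j \<noteq> 0 \<and> (\<forall>k<n. k \<notin> I2 \<and> k \<noteq> j \<longrightarrow> v $ k = 0)"
    if j: "j < n" "j \<notin> I2" for j
  proof -
    obtain w where w: "w \<in> carrier_vec (card I2)" "B *\<^sub>v w = col A j" using span[OF j(1)] by blast
    define d where "d = vec n (\<lambda>k. if k \<in> I2 then w $ card {a\<in>I2. a < k} else 0)"
    define e where "e = vec n (\<lambda>k. if k = j then 1 else (0::real))"
    have dc: "d \<in> carrier_vec n" and ec: "e \<in> carrier_vec n" unfolding d_def e_def by auto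
    have dw: "vec (card I2) (\<lambda>l. d $ pick I2 l) = w"
    proof (rule eq_vecI)
      fix l assume "l < dim_vec w"
      hence l: "l < card I2" using w by simp
      have "pick I2 l < n" using picks(1)[OF l] I2 by auto
      thus "vec (card I2) (\<lambda>l. d $ pick I2 l) $ l = w $ l"
        using l picks[OF l] unfolding d_def by simp
    qed (use w in simp)
    have Ad: "A *\<^sub>v d = col A j"
      using mult_support[OF A I2 dc] dw w unfolding d_def B_def by auto
    have Ae: "A *\<^sub>v e = col A j"
    proof (rule eq_vecI)
      fix i assume "i < dim_vec (col A j)"
      hence i: "i < m" using A by simp
      have "(A *\<^sub>v e) $ i = (\<Sum>k\<in>{0..<n}. A $$ (i,k) * e $ k)"
        using A ec i by (simp add: scalar_prod_def)
      also have "\<dots> = (\<Sum>k\<in>{0..<n}. if k = j then A $$ (i,k) else 0)"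
        unfolding e_def by (rule sum.cong) auto
      also have "\<dots> = A $$ (i,j)" using j by simp
      finally show "(A *\<^sub>v e) $ i = col A j $ i" using A i j by simp
    qed (use A in simp)
    define v where "v = d - e"
    have vc: "v \<in> carrier_vec n" unfolding v_def using dc ec by simp
    have "A *\<^sub>v v = A *\<^sub>v d - A *\<^sub>v e" unfolding v_def using mult_minus_distrib_mat_vec[OF A dc ec] .
    also have "\<dots> = 0\<^sub>v m" unfolding Ad Ae using A j by (intro eq_vecI) auto
    finally have Av: "A *\<^sub>v v = 0\<^sub>v m" .
    have "v $ j \<noteq> 0" unfolding v_def d_def e_def using j dc ec by simp
    moreover have "\<forall>k<n. k \<notin> I2 \<and> k \<noteq> j \<longrightarrow> v $ k = 0" unfolding v_def d_def e_def by simp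
    ultimately show ?thesis using vc Av by blast
  qed
  have "card I1 \<le> card {0..<m}" by (rule card_mono[OF finite_atLeastLessThan I1])
  hence c2: "card I2 \<le> m" using cards by simp
  have "\<exists>j0. j0 < n \<and> j0 \<notin> I2"
  proof (rule ccontr)
    assume "\<not> (\<exists>j0. j0 < n \<and> j0 \<notin> I2)"
    hence "{0..<n} \<subseteq> I2" by auto
    hence "card {0..<n} \<le> card I2" by (rule card_mono[OF fin2])
    thus False using c2 mn by simp
  qed
  then obtain j0 where j0: "j0 < n" "j0 \<notin> I2" by blast
  have partA: "infinite {x \<in> carrier_vec n. A *\<^sub>v x = b \<and> same_sign_on {0..<n} x xs}"
    if ex: "\<exists>i\<in>{0..<n} - I2. xs $ i \<noteq> 0"
  proof -
    obtain j where j: "j < n" "j \<notin> I2" "xs $ j \<noteq> 0" using ex by auto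
    obtain v where v: "v \<in> carrier_vec n" "A *\<^sub>v v = 0\<^sub>v m" "v $ j \<noteq> 0"
      "\<forall>k<n. k \<notin> I2 \<and> k \<noteq> j \<longrightarrow> v $ k = 0" using ker[OF j(1,2)] by blast
    have "\<forall>k\<in>{0..<n}. xs $ k \<noteq> 0 \<or> v $ k = 0" using v(4) nz j(3) by auto
    from inf_sol[OF A xs(1) v(1,2) j(1) v(3) _ this] show ?thesis using xs(2) by simp
  qed
  have partB: "infinite {x \<in> carrier_vec n. A *\<^sub>v x = b \<and> same_sign_on I2 x xs}"
  proof -
    obtain v where v: "v \<in> carrier_vec n" "A *\<^sub>v v = 0\<^sub>v m" "v $ j0 \<noteq> 0"
      using ker[OF j0] by blast
    have "\<forall>k\<in>I2. xs $ k \<noteq> 0 \<or> v $ k = 0" using nz by auto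
    from inf_sol[OF A xs(1) v(1,2) j0(1) v(3) I2 this] show ?thesis using xs(2) by simp
  qed
  have partC: "x = xs"
    if z: "\<forall>i\<in>{0..<n} - I2. xs $ i = 0" and x: "x \<in> carrier_vec n" "A *\<^sub>v x = b"
      "same_sign_on {0..<n} x xs" for x
  proof -
    define d where "d = x - xs"
    have dc: "d \<in> carrier_vec n" unfolding d_def using x xs by simp
    have dz: "\<forall>k<n. k \<notin> I2 \<longrightarrow> d $ k = 0"
    proof (intro allI impI)
      fix k assume k: "k < n" "k \<notin> I2"
      hence "xs $ k = 0" using z by auto
      moreover have "sgn (x $ k) = sgn (xs $ k)" using x(3) k unfolding same_sign_on_def by auto
      ultimately show "d $ k = 0" unfolding d_def using k x xs by (simp add: sgn_0_0)
    qed
    have "A *\<^sub>v d = A *\<^sub>v x - A *\<^sub>v xs" unfolding d_def by (rule mult_minus_distrib_mat_vec[OF A x(1) xs(1)])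
    also have "\<dots> = 0\<^sub>v m" unfolding x(2) xs(2) using b by (intro eq_vecI) auto
    finally have Ad: "A *\<^sub>v d = 0\<^sub>v m" .
    define u where "u = vec (card I2) (\<lambda>l. d $ pick I2 l)"
    have uc: "u \<in> carrier_vec (card I2)" unfolding u_def by simp
    have Bu: "B *\<^sub>v u = 0\<^sub>v m" using mult_support[OF A I2 dc dz] Ad unfolding u_def B_def by simp
    have "u = 0\<^sub>v (card I2)"
    proof (rule ccontr)
      assume "u \<noteq> 0\<^sub>v (card I2)"
      from vs.lin_depI[OF Bc uc this Bu dist] ind show False by blast
    qed
    have "d = 0\<^sub>v n"
    proof (rule eq_vecI)
      fix k assume "k < dim_vec (0\<^sub>v n)"
      hence k: "k < n" by simp
      show "d $ k = 0\<^sub>v n $ k"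
      proof (cases "k \<in> I2")
        case True
        define l where "l = card {a\<in>I2. a < k}"
        have "{a\<in>I2. a < k} \<subset> I2" using True by auto
        hence l: "l < card I2" unfolding l_def using fin2 by (simp add: psubset_card_mono)
        have "pick I2 l = k" unfolding l_def by (rule pick_card_in_set[OF True])
        hence "u $ l = d $ k" unfolding u_def using l by simp
        thus ?thesis using \<open>u = 0\<^sub>v (card I2)\<close> l k by simp
      qed (use dz k in simp)
    qed (use dc in simp)
    show "x = xs"
    proof (rule eq_vecI)
      fix k assume "k < dim_vec xs"
      hence k: "k < n" using xs(1) by simp
      have "d $ k = 0" using \<open>d = 0\<^sub>v n\<close> k by simp
      thus "x $ k = xs $ k" unfolding d_def using x(1) xs(1) k by simp
    qed (use x(1) xs(1) in simp)
  qed
  show ?thesis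
  proof (intro conjI)
    show "(\<exists>i\<in>{0..<n} - I2. xs $ i \<noteq> 0) \<longrightarrow>
        infinite {x \<in> carrier_vec n. A *\<^sub>v x = b \<and> same_sign_on {0..<n} x xs}"
      by (intro impI) (rule partA)
    show "infinite {x \<in> carrier_vec n. A *\<^sub>v x = b \<and> same_sign_on I2 x xs}" by (rule partB)
    show "(\<forall>i\<in>{0..<n} - I2. xs $ i = 0) \<longrightarrow>
        (\<forall>x \<in> carrier_vec n. A *\<^sub>v x = b \<and> same_sign_on {0..<n} x xs \<longrightarrow> x = xs)"
    proof (intro impI ballI)
      fix x assume z: "\<forall>i\<in>{0..<n} - I2. xs $ i = 0" and x: "x \<in> carrier_vec n"
        and h: "A *\<^sub>v x = b \<and> same_sign_on {0..<n} x xs"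
      from h have h1: "A *\<^sub>v x = b" and h2: "same_sign_on {0..<n} x xs" by auto
      show "x = xs" by (rule partC[OF z x h1 h2])
    qed
  qed
qed

end
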